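(* For each integer $n\ge0$ let $\theta^\Delta_n(x)=\sum_{k=0}^n\frac{(n+k)!}{2^k(n-k)!\,k!}(x)_{n-k}$, where $(x)_j=x(x-1)\cdots(x-j+1)$ and $(x)_0=1$. Then for every $n\ge0$ and every $x\in\mathbb{C}$, \[ \theta^\Delta_{n+2}(x)-(2n+3)\theta^\Delta_{n+1}(x)-x(x-1)\theta^\Delta_n(x-2)=0 . \] *)

theory Defs
  imports Complex_Main
begin

definition falling_fact :: "complex \<Rightarrow> nat \<Rightarrow> complex" where
  "falling_fact x j = (\<Prod>i<j. x - of_nat i)"

definition theta_Delta :: "nat \<Rightarrow> complex \<Rightarrow> complex" where
  "theta_Delta n x = (\<Sum>k=0..n. of_nat (fact (n + k)) / (2 ^ k * of_nat (fact (n - k)) * of_nat (fact k))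
                        * falling_fact x (n - k))"

end

theory Submission
  imports Defs
begin

definition cc :: "nat \<Rightarrow> nat \<Rightarrow> complex" where
  "cc n j = (if j \<le> n then of_nat (fact (2*n-j)) / (2^(n-j) * of_nat (fact j) * of_nat (fact (n-j))) else 0)"

lemma ff_Suc: "falling_fact x (Suc j) = falling_fact x j * (x - of_nat j)"
  by (simp add: falling_fact_def)

lemma ff_shift2: "falling_fact x (j+2) = x * (x - 1) * falling_fact (x - 2) j"
proof (induction j)
  case 0
  then show ?case by (simp add: falling_fact_def numeral_2_eq_2)
next
  case (Suc j)
  have e: "Suc j + 2 = Suc (j+2)" by simp
  have "falling_fact x (Suc j + 2) = falling_fact x (j+2) * (x - of_nat (j+2))"
    unfolding e by (rule ff_Suc)
  also have "\<dots> = x * (x - 1) * falling_fact (x - 2) j * (x - of_nat (j+2))"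
    by (simp only: Suc.IH)
  also have "(x - of_nat (j+2)) = (x - 2 - of_nat j)" by simp
  also have "x * (x - 1) * falling_fact (x - 2) j * (x - 2 - of_nat j) = x * (x - 1) * falling_fact (x - 2) (Suc j)"
    by (simp only: ff_Suc mult.assoc)
  finally show ?case .
qed

lemma theta_alt:
  assumes "n \<le> N"
  shows "theta_Delta n x = (\<Sum>j\<le>N. cc n j * falling_fact x j)"
proof -
  have "theta_Delta n x = (\<Sum>k=0..n. of_nat (fact (n + k)) / (2 ^ k * of_nat (fact (n - k)) * of_nat (fact k))
                        * falling_fact x (n - k))" by (simp add: theta_Delta_def)
  also have "\<dots> = (\<Sum>j=0..n. of_nat (fact (n + (n-j))) / (2 ^ (n-j) * of_nat (fact (n - (n-j))) * of_nat (fact (n-j)))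
                        * falling_fact x (n - (n-j)))"
    by (subst sum.atLeastAtMost_rev) simp
  also have "\<dots> = (\<Sum>j\<le>n. cc n j * falling_fact x j)"
    unfolding atLeast0AtMost
    proof (rule sum.cong)
    fix j assume "j \<in> {..n}"
    then have "n + (n-j) = 2*n - j" "n - (n-j) = j" by auto
    then show "of_nat (fact (n + (n-j))) / (2 ^ (n-j) * of_nat (fact (n - (n-j))) * of_nat (fact (n-j)))
                        * falling_fact x (n - (n-j)) = cc n j * falling_fact x j"
      using \<open>j \<in> {..n}\<close> by (simp add: cc_def mult_ac)
  qed simp
  also have "\<dots> = (\<Sum>j\<le>N. cc n j * falling_fact x j)"
    by (rule sum.mono_neutral_left) (use assms in \<open>auto simp: cc_def\<close>)
  finally show ?thesis .
qed

lemma c4: assumes "m = p + 2" "n = p + Suc e"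
  shows "cc (n+2) m - (2 * of_nat n + 3) * cc (n+1) m - (if m \<ge> 2 then cc n (m-2) else 0) = 0"
proof -
  define K where "K = p + 2*e + 2"
  define F where "F = (of_nat (fact K) :: complex)"
  define P where "P = (of_nat (fact p) :: complex)"
  define E where "E = (of_nat (fact e) :: complex)"
  have F0: "F \<noteq> 0" "P \<noteq> 0" "E \<noteq> 0" unfolding F_def P_def E_def by (simp_all only: of_nat_eq_0_iff fact_nonzero not_False_eq_True)
  have a: "2 * (n + 2) - m = Suc (Suc K)" "n + 2 - m = Suc e"
      "2 * (n + 1) - m = K" "n + 1 - m = e" "m - 2 = p" "2 * n - p = K"
      "n - p = Suc e" using assms unfolding K_def by simp_all
  have K: "of_nat K = (of_nat p + 2 * of_nat e + 2 :: complex)" unfolding K_def by simp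
  have 1: "cc (n+2) m = ((of_nat K + 2) * (of_nat K + 1) * F) / (2 * 2^e * (of_nat p + 2) * (of_nat p + 1) * P * (of_nat e + 1) * E)"
    unfolding cc_def a F_def P_def E_def using assms by (simp add: algebra_simps)
  have 2: "cc (n+1) m = F / (2^e * (of_nat p + 2) * (of_nat p + 1) * P * E)"
    unfolding cc_def a F_def P_def E_def using assms by (simp add: algebra_simps)
  have 3: "cc n (m-2) = F / (2 * 2^e * P * (of_nat e + 1) * E)"
    unfolding cc_def a F_def P_def E_def using assms by (simp add: algebra_simps)
  have nz: "(of_nat p + 2 :: complex) \<noteq> 0" "(of_nat p + 1::complex) \<noteq> 0" "(of_nat e + 1 :: complex) \<noteq> 0"
    by (metis of_nat_Suc of_nat_eq_0_iff nat.distinct(1) add.commute one_add_one add.left_commute)+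
  have nz2: "(2 + of_nat e * 2 :: complex) \<noteq> 0"
  proof -
    have "(2 + of_nat e * 2 :: complex) = of_nat (2 + e * 2)" by simp
    also have "\<dots> \<noteq> 0" by (simp only: of_nat_eq_0_iff)
    finally show ?thesis .
  qed
  have "cc (n+2) m - (2 * of_nat n + 3) * cc (n+1) m - cc n (m-2) = 0"
    unfolding 1 2 3 using F0 nz nz2
    by (simp add: divide_simps assms K) (simp add: algebra_simps)
  then show ?thesis using assms by simp
qed

lemma nzc: "(of_nat (Suc k) :: complex) \<noteq> 0" by (simp only: of_nat_eq_0_iff nat.distinct(1) not_False_eq_True)

lemma c0: assumes "m = 0"
  shows "cc (n+2) m - (2 * of_nat n + 3) * cc (n+1) m - (if m \<ge> 2 then cc n (m-2) else 0) = 0"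
proof -
  define K where "K = 2*n + 2"
  define F where "F = (of_nat (fact K) :: complex)"
  define P where "P = (of_nat (fact n) :: complex)"
  have F0: "F \<noteq> 0" "P \<noteq> 0" unfolding F_def P_def by (simp_all only: of_nat_eq_0_iff fact_nonzero not_False_eq_True)
  have a: "2 * (n + 2) - m = Suc (Suc K)" "n + 2 - m = Suc (Suc n)"
      "2 * (n + 1) - m = K" "n + 1 - m = Suc n" using assms unfolding K_def by simp_all
  have K: "of_nat K = (2 * of_nat n + 2 :: complex)" unfolding K_def by simp
  have 1: "cc (n+2) m = ((of_nat K + 2) * (of_nat K + 1) * F) / (4 * 2^n * (of_nat n + 2) * (of_nat n + 1) * P)"
    unfolding cc_def a F_def P_def using assms by (simp add: algebra_simps)
  have 2: "cc (n+1) m = F / (2 * 2^n * (of_nat n + 1) * P)"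
    unfolding cc_def a F_def P_def using assms by (simp add: algebra_simps)
  have nz: "(of_nat n + 2 :: complex) \<noteq> 0" "(of_nat n + 1::complex) \<noteq> 0"
    by (metis of_nat_Suc of_nat_eq_0_iff nat.distinct(1) add.commute one_add_one add.left_commute)+
  have "cc (n+2) m - (2 * of_nat n + 3) * cc (n+1) m = 0"
    unfolding 1 2 using F0 nz nzc[of "7 + n*4"]
    by (simp add: divide_simps K) (simp add: algebra_simps)
  then show ?thesis using assms by simp
qed

lemma c1: assumes "m = 1"
  shows "cc (n+2) m - (2 * of_nat n + 3) * cc (n+1) m - (if m \<ge> 2 then cc n (m-2) else 0) = 0"
proof -
  define K where "K = 2*n + 1"
  define F where "F = (of_nat (fact K) :: complex)"
  define P where "P = (of_nat (fact n) :: complex)"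
  have F0: "F \<noteq> 0" "P \<noteq> 0" unfolding F_def P_def by (simp_all only: of_nat_eq_0_iff fact_nonzero not_False_eq_True)
  have a: "2 * (n + 2) - m = Suc (Suc K)" "n + 2 - m = Suc n"
      "2 * (n + 1) - m = K" "n + 1 - m = n" using assms unfolding K_def by simp_all
  have K: "of_nat K = (2 * of_nat n + 1 :: complex)" unfolding K_def by simp
  have 1: "cc (n+2) m = ((of_nat K + 2) * (of_nat K + 1) * F) / (2 * 2^n * (of_nat n + 1) * P)"
    unfolding cc_def a F_def P_def using assms by (simp add: algebra_simps)
  have 2: "cc (n+1) m = F / (2^n * P)"
    unfolding cc_def a F_def P_def using assms by (simp add: algebra_simps)
  have nz: "(of_nat n + 1::complex) \<noteq> 0"
    by (metis of_nat_Suc of_nat_eq_0_iff nat.distinct(1) add.commute)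
  have "cc (n+2) m - (2 * of_nat n + 3) * cc (n+1) m = 0"
    unfolding 1 2 using F0 nz nzc[of "1 + n*2"]
    by (simp add: divide_simps K) (simp add: algebra_simps)
  then show ?thesis using assms by simp
qed

lemma coeff_id:
  "cc (n+2) m - (2 * of_nat n + 3) * cc (n+1) m - (if m \<ge> 2 then cc n (m-2) else 0) = 0"
proof -
  consider (A) "m = 0" | (B) "m = 1" | (C) "m = n + 2" | (D) "2 \<le> m" "m < n + 2" | (E) "m > n + 2"
    by arith
  then show ?thesis
  proof cases
    case A
    then show ?thesis by (rule c0)
  next
    case B
    then show ?thesis by (rule c1)
  next
    case C
    have a: "2 * (n + 2) - m = m" "n + 2 - m = 0" "\<not> m \<le> n + 1" "m - 2 = n" "2 * n - n = n" "n - n = 0"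
      "m \<le> n + 2" "2 \<le> m" using C by simp_all
    have x: "(of_nat (fact m) :: complex) \<noteq> 0" "(of_nat (fact n) :: complex) \<noteq> 0"
      by (simp_all only: of_nat_eq_0_iff fact_nonzero not_False_eq_True)
    have "cc (n+2) m = 1" unfolding cc_def using a x by simp
    moreover have "cc (n+1) m = 0" unfolding cc_def using a by simp
    moreover have "cc n (m-2) = 1" unfolding cc_def using a x by simp
    ultimately show ?thesis using a by simp
  next
    case D
    have "m = (m - 2) + 2" "n = (m - 2) + Suc (n + 1 - m)" using D by arith+
    then show ?thesis by (rule c4)
  next
    case E
    then have "\<not> m \<le> n + 2" "\<not> m \<le> n + 1" "\<not> m - 2 \<le> n" "2 \<le> m" by simp_all
    then show ?thesis unfolding cc_def by simp
  qed
qed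

theorem mainTheorem13:
  fixes n :: nat and x :: complex
  shows "theta_Delta (n + 2) x - (2 * of_nat n + 3) * theta_Delta (n + 1) x
           - x * (x - 1) * theta_Delta n (x - 2) = 0"
proof -
  define d where "d m = (if m \<ge> 2 then cc n (m-2) else 0)" for m
  have A: "x * (x - 1) * theta_Delta n (x - 2) = (\<Sum>m\<le>n+2. d m * falling_fact x m)"
  proof -
    have "x * (x - 1) * theta_Delta n (x - 2) = (\<Sum>j\<le>n. cc n j * falling_fact x (j+2))"
      by (simp only: theta_alt[of n n] sum_distrib_left ff_shift2 mult_ac order_refl)
    also have "\<dots> = (\<Sum>m\<le>n+2. d m * falling_fact x m)"
    proof -
      have "(\<Sum>m\<le>n+2. d m * falling_fact x m) = (\<Sum>m<Suc (Suc (Suc n)). d m * falling_fact x m)"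
        by (simp add: lessThan_Suc_atMost)
      also have "\<dots> = (\<Sum>m<Suc n. d (Suc (Suc m)) * falling_fact x (Suc (Suc m)))"
        by (simp only: sum.lessThan_Suc_shift) (simp add: d_def)
      also have "\<dots> = (\<Sum>j\<le>n. cc n j * falling_fact x (j+2))"
        by (simp add: lessThan_Suc_atMost d_def)
      finally show ?thesis by simp
    qed
    finally show ?thesis .
  qed
  have "theta_Delta (n + 2) x - (2 * of_nat n + 3) * theta_Delta (n + 1) x
           - x * (x - 1) * theta_Delta n (x - 2)
        = (\<Sum>m\<le>n+2. (cc (n+2) m - (2 * of_nat n + 3) * cc (n+1) m - d m) * falling_fact x m)"
  proof -
    have t2: "theta_Delta (n + 2) x = (\<Sum>m\<le>n+2. cc (n+2) m * falling_fact x m)"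
      by (rule theta_alt) simp
    have t1: "theta_Delta (n + 1) x = (\<Sum>m\<le>n+2. cc (n+1) m * falling_fact x m)"
      by (rule theta_alt) simp
    show ?thesis
      unfolding A t1 t2 sum_distrib_left sum_subtractf[symmetric]
      by (rule sum.cong) (simp_all add: algebra_simps)
  qed
  also have "\<dots> = 0" using coeff_id[of n] by (simp add: d_def)
  finally show ?thesis .
qed

end
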